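(* Let $M$ be a Malcev algebra over a field of characteristic different from $2$ and $3$, and let $X$ be a generating set of $M$ (as an algebra). If $\mathrm{J}(x,y,z)=0$ for all $x,y,z\in X$, then $\mathrm{J}(u,v,w)=0$ for all $u,v,w\in M$, i.e. $M$ is a Lie algebra.
   Context: A Malcev algebra is an anticommutative algebra (with product written $xy$) satisfying the Malcev identity $(xy)(xz)=((xy)z)x+((yz)x)x+((zx)x)y$. For elements $a,b,c$ of an algebra, the Jacobian is $\mathrm{J}(a,b,c)=(ab)c+(bc)a+(ca)b$. A Lie algebra is an anticommutative algebra in which $\mathrm{J}$ vanishes identically. *)

theory Defs
  imports Main "HOL.Vector_Spaces"
begin

definition bilinear_product :: "('k::field \<Rightarrow> 'm::ab_group_add \<Rightarrow> 'm) \<Rightarrow> ('m \<Rightarrow> 'm \<Rightarrow> 'm) \<Rightarrow> bool" where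
  "bilinear_product s p \<longleftrightarrow>
     (\<forall>x y z. p (x + y) z = p x z + p y z) \<and>
     (\<forall>x y z. p x (y + z) = p x y + p x z) \<and>
     (\<forall>a x y. p (s a x) y = s a (p x y)) \<and>
     (\<forall>a x y. p x (s a y) = s a (p x y))"

definition anticommutative :: "('m::ab_group_add \<Rightarrow> 'm \<Rightarrow> 'm) \<Rightarrow> bool" where
  "anticommutative p \<longleftrightarrow> (\<forall>x. p x x = 0)"

definition malcev_identity :: "('m \<Rightarrow> 'm \<Rightarrow> 'm::ab_group_add) \<Rightarrow> bool" where
  "malcev_identity p \<longleftrightarrow> (\<forall>x y z.
     p (p x y) (p x z) = p (p (p x y) z) x + p (p (p y z) x) x + p (p (p z x) x) y)"

definition malcev_algebra :: "('k::field \<Rightarrow> 'm::ab_group_add \<Rightarrow> 'm) \<Rightarrow> ('m \<Rightarrow> 'm \<Rightarrow> 'm) \<Rightarrow> bool" where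
  "malcev_algebra s p \<longleftrightarrow> vector_space s \<and> bilinear_product s p \<and> anticommutative p \<and> malcev_identity p"

definition jacobian :: "('m::ab_group_add \<Rightarrow> 'm \<Rightarrow> 'm) \<Rightarrow> 'm \<Rightarrow> 'm \<Rightarrow> 'm \<Rightarrow> 'm" where
  "jacobian p a b c = p (p a b) c + p (p b c) a + p (p c a) b"

inductive_set generated_subalgebra :: "('k::field \<Rightarrow> 'm::ab_group_add \<Rightarrow> 'm) \<Rightarrow> ('m \<Rightarrow> 'm \<Rightarrow> 'm) \<Rightarrow> 'm set \<Rightarrow> 'm set"
  for s p X where
  gen: "x \<in> X \<Longrightarrow> x \<in> generated_subalgebra s p X"
| zero: "0 \<in> generated_subalgebra s p X"
| add: "x \<in> generated_subalgebra s p X \<Longrightarrow> y \<in> generated_subalgebra s p X \<Longrightarrow> x + y \<in> generated_subalgebra s p X"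
| scale: "x \<in> generated_subalgebra s p X \<Longrightarrow> s a x \<in> generated_subalgebra s p X"
| mult: "x \<in> generated_subalgebra s p X \<Longrightarrow> y \<in> generated_subalgebra s p X \<Longrightarrow> p x y \<in> generated_subalgebra s p X"

end

theory Submission
  imports Defs
begin

definition Mal :: "('m::ab_group_add \<Rightarrow> 'm \<Rightarrow> 'm) \<Rightarrow> 'm \<Rightarrow> 'm \<Rightarrow> 'm \<Rightarrow> 'm" where
  "Mal p x y z = p (p x y) (p x z) - (p (p (p x y) z) x + p (p (p y z) x) x + p (p (p z x) x) y)"

definition MLin :: "('m::ab_group_add \<Rightarrow> 'm \<Rightarrow> 'm) \<Rightarrow> 'm \<Rightarrow> 'm \<Rightarrow> 'm \<Rightarrow> 'm \<Rightarrow> 'm" where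
  "MLin p x w y z = Mal p (x + w) y z - Mal p x y z - Mal p w y z"

inductive dg :: "('k::field \<Rightarrow> 'm::ab_group_add \<Rightarrow> 'm) \<Rightarrow> ('m \<Rightarrow> 'm \<Rightarrow> 'm) \<Rightarrow> 'm set \<Rightarrow> nat \<Rightarrow> 'm \<Rightarrow> bool" for s p X where
  dgen: "x \<in> X \<Longrightarrow> dg s p X 1 x"
| dzero: "dg s p X n 0"
| dadd: "dg s p X n x \<Longrightarrow> dg s p X n y \<Longrightarrow> dg s p X n (x + y)"
| dscale: "dg s p X n x \<Longrightarrow> dg s p X n (s a x)"
| dmult: "dg s p X i x \<Longrightarrow> dg s p X j y \<Longrightarrow> dg s p X (i + j) (p x y)"

inductive hs for s p X where
  hdg: "dg s p X n x \<Longrightarrow> hs s p X x"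
| hadd: "hs s p X x \<Longrightarrow> hs s p X y \<Longrightarrow> hs s p X (x + y)"

locale malc =
  fixes s :: "'k::field \<Rightarrow> 'm::ab_group_add \<Rightarrow> 'm" and p :: "'m \<Rightarrow> 'm \<Rightarrow> 'm"
  assumes vs: "vector_space s" and bil: "bilinear_product s p"
    and ac: "anticommutative p" and mi: "malcev_identity p"
begin

interpretation V: vector_space s by (rule vs)

lemma addL: "p (x + y) z = p x z + p y z" using bil unfolding bilinear_product_def by blast
lemma addR: "p x (y + z) = p x y + p x z" using bil unfolding bilinear_product_def by blast
lemma scL: "p (s a x) y = s a (p x y)" using bil unfolding bilinear_product_def by blast
lemma scR: "p x (s a y) = s a (p x y)" using bil unfolding bilinear_product_def by blast
lemma pxx: "p x x = 0" using ac unfolding anticommutative_def by blast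
lemma zeroL: "p 0 y = 0" using addL[of 0 0 y] by simp
lemma zeroR: "p y 0 = 0" using addR[of y 0 0] by simp
lemma minusL: "p (- x) y = - p x y"
  using addL[of x "- x" y] zeroL by (simp add: eq_neg_iff_add_eq_0 add.commute)
lemma minusR: "p y (- x) = - p y x"
  using addR[of y x "- x"] zeroR by (simp add: eq_neg_iff_add_eq_0 add.commute)
lemma diffL: "p (x - y) z = p x z - p y z"
  using addL[of x "- y" z] minusL by simp
lemma diffR: "p z (x - y) = p z x - p z y"
  using addR[of z x "- y"] minusR by simp
lemma skew: "p x y = - p y x"
proof -
  have "p (x + y) (x + y) = p x y + p y x" unfolding addL addR by (simp add: pxx)
  hence "p x y + p y x = 0" by (metis pxx)
  thus ?thesis by (simp add: eq_neg_iff_add_eq_0 add.commute)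
qed

lemmas bl = addL addR minusL minusR diffL diffR zeroL zeroR pxx

lemma MLin0: "MLin p x w y z = 0"
  using mi unfolding malcev_identity_def MLin_def Mal_def by simp

lemma key:
  "(jacobian p (p w x) y z + (jacobian p (p y z) w x + jacobian p (p y z) w x)
     - p (jacobian p w y z) x - p w (jacobian p x y z))
   + (jacobian p (p w x) y z + (jacobian p (p y z) w x + jacobian p (p y z) w x)
     - p (jacobian p w y z) x - p w (jacobian p x y z)) = 0"
proof -
  have f0: "p (x) (w) = - p (w) (x)" by (rule skew)
  have f1: "p (y) (w) = - p (w) (y)" by (rule skew)
  have f2: "p (y) (x) = - p (x) (y)" by (rule skew)
  have f3: "p (z) (w) = - p (w) (z)" by (rule skew)
  have f4: "p (z) (x) = - p (x) (z)" by (rule skew)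
  have f5: "p (z) (y) = - p (y) (z)" by (rule skew)
  have f6: "p (p (w) (x)) (w) = - p (w) (p (w) (x))" by (rule skew)
  have f7: "p (p (w) (x)) (y) = - p (y) (p (w) (x))" by (rule skew)
  have f8: "p (p (w) (x)) (z) = - p (z) (p (w) (x))" by (rule skew)
  have f9: "p (p (w) (y)) (w) = - p (w) (p (w) (y))" by (rule skew)
  have f10: "p (p (w) (y)) (z) = - p (z) (p (w) (y))" by (rule skew)
  have f11: "p (p (w) (z)) (w) = - p (w) (p (w) (z))" by (rule skew)
  have f12: "p (p (w) (z)) (x) = - p (x) (p (w) (z))" by (rule skew)
  have f13: "p (p (w) (z)) (y) = - p (y) (p (w) (z))" by (rule skew)
  have f14: "p (p (w) (z)) (p (w) (x)) = - p (p (w) (x)) (p (w) (z))" by (rule skew)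
  have f15: "p (p (w) (p (w) (x))) (z) = - p (z) (p (w) (p (w) (x)))" by (rule skew)
  have f16: "p (p (w) (p (w) (y))) (x) = - p (x) (p (w) (p (w) (y)))" by (rule skew)
  have f17: "p (p (w) (p (w) (z))) (x) = - p (x) (p (w) (p (w) (z)))" by (rule skew)
  have f18: "p (p (w) (p (w) (z))) (y) = - p (y) (p (w) (p (w) (z)))" by (rule skew)
  have f19: "p (p (w) (p (x) (y))) (w) = - p (w) (p (w) (p (x) (y)))" by (rule skew)
  have f20: "p (p (w) (p (x) (y))) (z) = - p (z) (p (w) (p (x) (y)))" by (rule skew)
  have f21: "p (p (w) (p (x) (z))) (w) = - p (w) (p (w) (p (x) (z)))" by (rule skew)
  have f22: "p (p (w) (p (x) (z))) (y) = - p (y) (p (w) (p (x) (z)))" by (rule skew)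
  have f23: "p (p (w) (p (y) (z))) (w) = - p (w) (p (w) (p (y) (z)))" by (rule skew)
  have f24: "p (p (w) (p (y) (z))) (x) = - p (x) (p (w) (p (y) (z)))" by (rule skew)
  have f25: "p (p (x) (y)) (w) = - p (w) (p (x) (y))" by (rule skew)
  have f26: "p (p (x) (y)) (y) = - p (y) (p (x) (y))" by (rule skew)
  have f27: "p (p (x) (y)) (z) = - p (z) (p (x) (y))" by (rule skew)
  have f28: "p (p (x) (y)) (p (w) (z)) = - p (p (w) (z)) (p (x) (y))" by (rule skew)
  have f29: "p (p (x) (z)) (w) = - p (w) (p (x) (z))" by (rule skew)
  have f30: "p (p (x) (z)) (x) = - p (x) (p (x) (z))" by (rule skew)
  have f31: "p (p (x) (z)) (y) = - p (y) (p (x) (z))" by (rule skew)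
  have f32: "p (p (x) (z)) (p (w) (y)) = - p (p (w) (y)) (p (x) (z))" by (rule skew)
  have f33: "p (p (x) (p (w) (z))) (w) = - p (w) (p (x) (p (w) (z)))" by (rule skew)
  have f34: "p (p (x) (p (w) (z))) (y) = - p (y) (p (x) (p (w) (z)))" by (rule skew)
  have f35: "p (p (x) (p (x) (z))) (y) = - p (y) (p (x) (p (x) (z)))" by (rule skew)
  have f36: "p (p (x) (p (y) (z))) (w) = - p (w) (p (x) (p (y) (z)))" by (rule skew)
  have f37: "p (p (x) (p (y) (z))) (x) = - p (x) (p (x) (p (y) (z)))" by (rule skew)
  have f38: "p (p (x) (p (y) (z))) (y) = - p (y) (p (x) (p (y) (z)))" by (rule skew)
  have f39: "p (p (y) (z)) (w) = - p (w) (p (y) (z))" by (rule skew)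
  have f40: "p (p (y) (z)) (x) = - p (x) (p (y) (z))" by (rule skew)
  have f41: "p (p (y) (z)) (y) = - p (y) (p (y) (z))" by (rule skew)
  have f42: "p (p (y) (z)) (z) = - p (z) (p (y) (z))" by (rule skew)
  have f43: "p (p (y) (z)) (p (w) (x)) = - p (p (w) (x)) (p (y) (z))" by (rule skew)
  have f44: "p (p (y) (z)) (p (x) (y)) = - p (p (x) (y)) (p (y) (z))" by (rule skew)
  have f45: "p (p (y) (p (w) (x))) (w) = - p (w) (p (y) (p (w) (x)))" by (rule skew)
  have f46: "p (p (y) (p (w) (x))) (z) = - p (z) (p (y) (p (w) (x)))" by (rule skew)
  have f47: "p (p (y) (p (w) (z))) (x) = - p (x) (p (y) (p (w) (z)))" by (rule skew)
  have f48: "p (p (y) (p (x) (y))) (z) = - p (z) (p (y) (p (x) (y)))" by (rule skew)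
  have f49: "p (p (y) (p (x) (z))) (w) = - p (w) (p (y) (p (x) (z)))" by (rule skew)
  have f50: "p (p (y) (p (x) (z))) (y) = - p (y) (p (y) (p (x) (z)))" by (rule skew)
  have f51: "p (p (y) (p (x) (z))) (z) = - p (z) (p (y) (p (x) (z)))" by (rule skew)
  have f52: "p (p (y) (p (y) (z))) (x) = - p (x) (p (y) (p (y) (z)))" by (rule skew)
  have f53: "p (p (z) (p (w) (x))) (w) = - p (w) (p (z) (p (w) (x)))" by (rule skew)
  have f54: "p (p (z) (p (w) (x))) (y) = - p (y) (p (z) (p (w) (x)))" by (rule skew)
  have f55: "p (p (z) (p (w) (y))) (w) = - p (w) (p (z) (p (w) (y)))" by (rule skew)
  have f56: "p (p (z) (p (w) (y))) (x) = - p (x) (p (z) (p (w) (y)))" by (rule skew)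
  have f57: "p (p (z) (p (x) (y))) (w) = - p (w) (p (z) (p (x) (y)))" by (rule skew)
  have f58: "p (p (z) (p (x) (y))) (x) = - p (x) (p (z) (p (x) (y)))" by (rule skew)
  have f59: "p (p (z) (p (x) (y))) (y) = - p (y) (p (z) (p (x) (y)))" by (rule skew)
  have f60: "p (p (z) (p (x) (y))) (z) = - p (z) (p (z) (p (x) (y)))" by (rule skew)
  have f61: "p (p (z) (p (y) (z))) (x) = - p (x) (p (z) (p (y) (z)))" by (rule skew)
  have "(jacobian p (p w x) y z + (jacobian p (p y z) w x + jacobian p (p y z) w x)
     - p (jacobian p w y z) x - p w (jacobian p x y z))
   + (jacobian p (p w x) y z + (jacobian p (p y z) w x + jacobian p (p y z) w x)
     - p (jacobian p w y z) x - p w (jacobian p x y z))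
   = MLin p w x y z + MLin p w y x z + MLin p w y x z + MLin p w y z x - MLin p w z x y"
    unfolding MLin_def Mal_def jacobian_def
    by (simp only: bl f0 f1 f2 f3 f4 f5 f6 f7 f8 f9 f10 f11 f12 f13 f14 f15 f16 f17 f18 f19 f20 f21 f22 f23 f24 f25 f26 f27 f28 f29 f30 f31 f32 f33 f34 f35 f36 f37 f38 f39 f40 f41 f42 f43 f44 f45 f46 f47 f48 f49 f50 f51 f52 f53 f54 f55 f56 f57 f58 f59 f60 f61) (simp add: algebra_simps)
  thus ?thesis by (simp add: MLin0)
qed


lemma jcyc: "jacobian p a b c = jacobian p b c a"
  unfolding jacobian_def by (simp add: ac_simps)

lemma jswap: "jacobian p a b c = - jacobian p b a c"
proof -
  have e1: "p b a = - p a b" by (rule skew)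
  have e2: "p a c = - p c a" by (rule skew)
  have e3: "p c b = - p b c" by (rule skew)
  show ?thesis unfolding jacobian_def by (simp add: e1 e2 e3 minusL algebra_simps)
qed

lemma jadd1: "jacobian p (x + y) b c = jacobian p x b c + jacobian p y b c"
  unfolding jacobian_def by (simp add: addL addR algebra_simps)
lemma jsc1: "jacobian p (s r x) b c = s r (jacobian p x b c)"
  unfolding jacobian_def by (simp add: scL scR V.scale_right_distrib)
lemma j01: "jacobian p 0 b c = 0"
  unfolding jacobian_def by (simp add: zeroL zeroR)
lemma jadd2: "jacobian p a (x + y) c = jacobian p a x c + jacobian p a y c"
  by (metis jadd1 jcyc)
lemma jadd3: "jacobian p a b (x + y) = jacobian p a b x + jacobian p a b y"
  by (metis jadd1 jcyc)
lemma jsc2: "jacobian p a (s r x) c = s r (jacobian p a x c)"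
  by (metis jsc1 jcyc)
lemma jsc3: "jacobian p a b (s r x) = s r (jacobian p a b x)"
  by (metis jsc1 jcyc)
lemma j02: "jacobian p a 0 c = 0" by (metis j01 jcyc)
lemma j03: "jacobian p a b 0 = 0" by (metis j01 jcyc)

lemmas jlin = jadd1 jadd2 jadd3 jsc1 jsc2 jsc3 j01 j02 j03

lemma six_aux:
  fixes A B :: "'a::ab_group_add"
  assumes "(A + (B + B)) + (A + (B + B)) = 0" "(B + (A + A)) + (B + (A + A)) = 0"
  shows "A + A + A + A + A + A = 0"
proof -
  have "A + A + A + A + A + A = ((B + (A + A)) + (B + (A + A))) + ((B + (A + A)) + (B + (A + A)))
     - ((A + (B + B)) + (A + (B + B)))" by (simp add: algebra_simps)
  thus ?thesis using assms by simp
qed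

lemma scale_nat: "s (of_nat n) a = (\<Sum>i<n. a)"
  by (induction n) (simp_all add: V.scale_left_distrib)

lemma six_zero:
  fixes a :: 'm
  assumes c2: "CHAR('k) \<noteq> 2" and c3: "CHAR('k) \<noteq> 3" and h: "a + a + a + a + a + a = 0"
  shows "a = 0"
proof -
  have d: "\<And>n q::nat. q dvd n \<Longrightarrow> n \<noteq> 0 \<Longrightarrow> q \<le> n" using dvd_imp_le by blast
  have n2: "of_nat 2 \<noteq> (0::'k)"
  proof
    assume "of_nat 2 = (0::'k)"
    hence "CHAR('k) dvd 2" by (simp only: of_nat_eq_0_iff_char_dvd)
    moreover have "CHAR('k) \<noteq> 0" using calculation by (metis dvd_0_left_iff zero_neq_numeral)
    ultimately have "CHAR('k) \<le> 2" using d by auto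
    thus False using c2 \<open>CHAR('k) \<noteq> 0\<close> CHAR_not_1[where 'a='k]
      by (metis One_nat_def le_Suc_eq numeral_2_eq_2 le_zero_eq)
  qed
  have n3: "of_nat 3 \<noteq> (0::'k)"
  proof
    assume "of_nat 3 = (0::'k)"
    hence "CHAR('k) dvd 3" by (simp only: of_nat_eq_0_iff_char_dvd)
    moreover have "CHAR('k) \<noteq> 0" using calculation by (metis dvd_0_left_iff zero_neq_numeral)
    moreover have "CHAR('k) \<noteq> 2" by (rule c2)
    ultimately have "CHAR('k) \<le> 3" "CHAR('k) \<noteq> 2" using d by auto
    moreover have "CHAR('k) \<noteq> 1" using CHAR_not_1[where 'a='k] by simp
    moreover have "\<not> (2::nat) dvd 3" by simp
    ultimately show False using c3 \<open>CHAR('k) dvd 3\<close> \<open>CHAR('k) \<noteq> 0\<close>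
      by (metis One_nat_def le_Suc_eq numeral_3_eq_3 numeral_2_eq_2 le_zero_eq)
  qed
  have n6: "of_nat 6 \<noteq> (0::'k)"
  proof -
    have "(of_nat 6::'k) = of_nat 2 * of_nat 3" by simp
    thus ?thesis using n2 n3 by (metis mult_eq_0_iff)
  qed
  have "s (of_nat 6) a = (\<Sum>i<(6::nat). a)" by (rule scale_nat)
  also have "\<dots> = a + a + a + a + a + a"
    by (simp add: numeral_eq_Suc lessThan_Suc algebra_simps)
  finally have "s (of_nat 6) a = 0" using h by simp
  thus ?thesis using n6 by simp
qed

lemma dg0: "dg s p X n x \<Longrightarrow> n = 0 \<Longrightarrow> x = 0"
  by (induction rule: dg.induct) (auto simp: V.scale_zero_right zeroL)

lemma hom:
  assumes c2: "CHAR('k) \<noteq> 2" and c3: "CHAR('k) \<noteq> 3"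
    and hX: "\<forall>x\<in>X. \<forall>y\<in>X. \<forall>z\<in>X. jacobian p x y z = 0"
  shows "\<forall>i j k a b c. i + j + k = N \<longrightarrow> dg s p X i a \<longrightarrow> dg s p X j b \<longrightarrow> dg s p X k c
           \<longrightarrow> jacobian p a b c = 0"
proof (induction N rule: less_induct)
  case (less N)
  have IH: "\<And>i j k a b c. i + j + k < N \<Longrightarrow> dg s p X i a \<Longrightarrow> dg s p X j b \<Longrightarrow> dg s p X k c
           \<Longrightarrow> jacobian p a b c = 0" using less by blast
  have core: "jacobian p (p w x) b c = 0"
    if N: "ia + ib + j + k = N" and dw: "dg s p X ia w" and dx: "dg s p X ib x"
      and db: "dg s p X j b" and dc: "dg s p X k c" for ia ib j k w x b c
  proof (cases "ia = 0 \<or> ib = 0 \<or> j = 0 \<or> k = 0")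
    case True
    thus ?thesis using dg0[OF dw] dg0[OF dx] dg0[OF db] dg0[OF dc]
      by (auto simp: jlin zeroL zeroR)
  next
    case False
    have h1: "jacobian p w b c = 0" using IH[OF _ dw db dc] N False by simp
    have h2: "jacobian p x b c = 0" using IH[OF _ dx db dc] N False by simp
    have h3: "jacobian p b w x = 0" using IH[OF _ dw dx db] N False jcyc[of b w x] by simp
    have h4: "jacobian p c w x = 0" using IH[OF _ dw dx dc] N False jcyc[of c w x] by simp
    have k1: "(jacobian p (p w x) b c + (jacobian p (p b c) w x + jacobian p (p b c) w x))
      + (jacobian p (p w x) b c + (jacobian p (p b c) w x + jacobian p (p b c) w x)) = 0"
      using key[of w x b c] by (simp add: h1 h2 zeroL zeroR)
    have k2: "(jacobian p (p b c) w x + (jacobian p (p w x) b c + jacobian p (p w x) b c))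
      + (jacobian p (p b c) w x + (jacobian p (p w x) b c + jacobian p (p w x) b c)) = 0"
      using key[of b c w x] by (simp add: h3 h4 zeroL zeroR)
    show ?thesis using six_zero[OF c2 c3 six_aux[OF k1 k2]] .
  qed
  have step1: "dg s p X k c \<Longrightarrow> 2 + k = N \<Longrightarrow> a \<in> X \<Longrightarrow> b \<in> X \<Longrightarrow> jacobian p a b c = 0" for a b c k
  proof (induction rule: dg.induct)
    case (dgen x)
    then show ?case using hX by blast
  next
    case (dmult i x j y)
    have "jacobian p (p x y) a b = 0"
      using core[where ia=i and ib=j and j=1 and k=1 and w=x and x=y and b=a and c=b] dmult dgen[of a X s p] dgen[of b X s p] by simp
    then show ?case using jcyc[of "p x y" a b] by simp
  qed (auto simp: jlin V.scale_zero_right)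
  have step2: "dg s p X j b \<Longrightarrow> 1 + j + k = N \<Longrightarrow> a \<in> X \<Longrightarrow> dg s p X k c \<Longrightarrow> jacobian p a b c = 0" for a b c j k
  proof (induction rule: dg.induct)
    case (dgen x)
    show ?case using step1[where a=a and b=x and c=c and k=k] dgen by simp
  next
    case (dmult i x j y)
    have "jacobian p (p x y) c a = 0"
      using core[where ia=i and ib=j and j=k and k=1 and w=x and x=y and b=c and c=a] dmult dgen[of a X s p] by simp
    then show ?case using jcyc[of a "p x y" c] by simp
  qed (auto simp: jlin V.scale_zero_right)
  have step3: "dg s p X i a \<Longrightarrow> i + j + k = N \<Longrightarrow> dg s p X j b \<Longrightarrow> dg s p X k c \<Longrightarrow> jacobian p a b c = 0" for a b c i j k
  proof (induction rule: dg.induct)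
    case (dgen x)
    then show ?case using step2[where a=x and b=b and c=c and j=j and k=k] by simp
  next
    case (dmult i x j' y)
    then show ?case using core[where ia=i and ib=j' and j=j and k=k and w=x and x=y and b=b and c=c] by simp
  qed (auto simp: jlin V.scale_zero_right)
  show ?case using step3 by blast
qed

lemma hs_scale: "hs s p X x \<Longrightarrow> hs s p X (s r x)"
  by (induction rule: hs.induct) (auto intro: hs.intros dg.intros simp: V.scale_right_distrib)

lemma hs_mult: "hs s p X x \<Longrightarrow> hs s p X y \<Longrightarrow> hs s p X (p x y)"
proof (induction arbitrary: y rule: hs.induct)
  case (hdg n x)
  note dx = hdg.hyps
  from hdg.prems show ?case
  proof (induction rule: hs.induct)
    case (hdg m y) then show ?case using hs.hdg[OF dg.dmult[OF dx hdg.hyps]] by simp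
  next
    case (hadd y1 y2) then show ?case by (auto intro: hs.intros simp: addR)
  qed
next
  case (hadd x1 x2) then show ?case by (auto intro: hs.intros simp: addL)
qed

lemma gen_hs: "x \<in> generated_subalgebra s p X \<Longrightarrow> hs s p X x"
  by (induction rule: generated_subalgebra.induct)
    (auto intro: hs.intros dg.intros hs_scale hs_mult)

lemma hs_jac:
  assumes c2: "CHAR('k) \<noteq> 2" and c3: "CHAR('k) \<noteq> 3"
    and hX: "\<forall>x\<in>X. \<forall>y\<in>X. \<forall>z\<in>X. jacobian p x y z = 0"
  shows "hs s p X a \<Longrightarrow> hs s p X b \<Longrightarrow> hs s p X c \<Longrightarrow> jacobian p a b c = 0"
proof (induction arbitrary: b c rule: hs.induct)
  case (hdg n a)
  from hdg.prems show ?case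
  proof (induction arbitrary: c rule: hs.induct)
    case (hdg m b)
    from hdg.prems show ?case
    proof (induction rule: hs.induct)
      case (hdg l c)
      then show ?case using hom[OF c2 c3 hX, of "n + m + l"] \<open>dg s p X n a\<close> \<open>dg s p X m b\<close> by blast
    next
      case (hadd x y) then show ?case by (simp add: jlin)
    qed
  next
    case (hadd x y) then show ?case by (simp add: jlin)
  qed
next
  case (hadd x y) then show ?case by (simp add: jlin)
qed

end

theorem mainTheorem1:
  fixes s :: "'k::field \<Rightarrow> 'm::ab_group_add \<Rightarrow> 'm"
    and p :: "'m \<Rightarrow> 'm \<Rightarrow> 'm"
    and X :: "'m set"
  assumes "malcev_algebra s p"
    and "CHAR('k) \<noteq> 2" and "CHAR('k) \<noteq> 3"
    and "generated_subalgebra s p X = UNIV"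
    and "\<forall>x\<in>X. \<forall>y\<in>X. \<forall>z\<in>X. jacobian p x y z = 0"
  shows "\<forall>u v w. jacobian p u v w = 0"
proof -
  have M: "malc s p" using assms(1) unfolding malcev_algebra_def malc_def by auto
  interpret malc s p by (rule M)
  have "\<And>x. hs s p X x" using gen_hs assms(4) by auto
  thus ?thesis using hs_jac[OF assms(2,3,5)] by blast
qed

end
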